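(* Let $G=(V,E)$ be a simple graph with at least two pendent vertices. Let $u\in V$ with $d_G(u)\ge 3$, let $T$ be a hanging tree of $G$ connected to $u$ (with $|V(T)|\ge 1$), and let $v$ be a pendent vertex of $G$ with $v\notin V(T)$. Let $G'$ be the graph obtained from $G$ by the branch-transformation from $u$ to $v$. Then $\mathrm{irr}_t(G) > \mathrm{irr}_t(G')$.
   Context: For a simple graph $G=(V,E)$ and $w\in V$, $d_G(w)$ denotes the degree of $w$. The total irregularity is $\mathrm{irr}_t(G)=\frac12\sum_{x,y\in V}|d_G(x)-d_G(y)|$, where the sum runs over all ordered pairs $(x,y)\in V\times V$. A pendent vertex is a vertex of degree $1$. An induced subtree $T$ of $G$ is a hanging tree of $G$ connected to a vertex $u\notin V(T)$ if $G$ is obtained from the disjoint union of $T$ and $G-V(T)$ by adding exactly one edge $wu$ with $w\in V(T)$ and $u\in V(G)\setminus V(T)$. Branch-transformation from $u$ to $v$: given $u$, $T$ and $v$ as in the claim, where $wu$ is the unique edge joining $T$ to $G-V(T)$, let $G'$ be the graph obtained from $G$ by deleting the edge $wu$ and adding the edge $wv$. That is, $T$ is detached from $u$ and attached to $v$. *)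

theory Defs
  imports Complex_Main
begin

definition simple_graph :: "'a set \<Rightarrow> 'a set set \<Rightarrow> bool" where
  "simple_graph V E \<longleftrightarrow> finite V \<and> (\<forall>e\<in>E. e \<subseteq> V \<and> card e = 2)"

definition degree :: "'a set set \<Rightarrow> 'a \<Rightarrow> nat" where
  "degree E w = card {e \<in> E. w \<in> e}"

definition pendent :: "'a set set \<Rightarrow> 'a \<Rightarrow> bool" where
  "pendent E w \<longleftrightarrow> degree E w = 1"

definition irr_t :: "'a set \<Rightarrow> 'a set set \<Rightarrow> real" where
  "irr_t V E = (1/2) * (\<Sum>x\<in>V. \<Sum>y\<in>V. \<bar>real (degree E x) - real (degree E y)\<bar>)"

definition induced_edges :: "'a set set \<Rightarrow> 'a set \<Rightarrow> 'a set set" where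
  "induced_edges E S = {e \<in> E. e \<subseteq> S}"

definition connected_on :: "'a set \<Rightarrow> 'a set set \<Rightarrow> bool" where
  "connected_on S F \<longleftrightarrow>
     (\<forall>x\<in>S. \<forall>y\<in>S. (x, y) \<in> {(a, b). a \<in> S \<and> b \<in> S \<and> {a, b} \<in> F}\<^sup>*)"

definition is_cycle :: "'a set set \<Rightarrow> 'a list \<Rightarrow> bool" where
  "is_cycle F xs \<longleftrightarrow> length xs \<ge> 3 \<and> distinct xs \<and>
     (\<forall>i < length xs. {xs ! i, xs ! ((i + 1) mod length xs)} \<in> F)"

definition induced_tree :: "'a set set \<Rightarrow> 'a set \<Rightarrow> bool" where
  "induced_tree E S \<longleftrightarrow> S \<noteq> {} \<and> connected_on S (induced_edges E S) \<and>
     \<not> (\<exists>xs. is_cycle (induced_edges E S) xs)"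

definition hanging_tree :: "'a set \<Rightarrow> 'a set set \<Rightarrow> 'a set \<Rightarrow> 'a \<Rightarrow> 'a \<Rightarrow> bool" where
  "hanging_tree V E T w u \<longleftrightarrow> T \<subseteq> V \<and> u \<in> V - T \<and> w \<in> T \<and> induced_tree E T \<and>
     E = induced_edges E T \<union> induced_edges E (V - T) \<union> {{w, u}}"

definition branch_transform :: "'a set set \<Rightarrow> 'a \<Rightarrow> 'a \<Rightarrow> 'a \<Rightarrow> 'a set set" where
  "branch_transform E w u v = (E - {{w, u}}) \<union> {{w, v}}"

end

theory Submission
  imports Defs
begin

lemma sum_abs_lemma:
  fixes f g :: "'a \<Rightarrow> real"
  assumes fin: "finite V" and uV: "u \<in> V" and vV: "v \<in> V" and uv: "u \<noteq> v"
    and same: "\<And>x. x \<noteq> u \<Longrightarrow> x \<noteq> v \<Longrightarrow> g x = f x"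
    and fu: "g u = f u - 1" and fv: "f v = 1" and gv: "g v = 2" and a3: "f u \<ge> 3"
  shows "(\<Sum>x\<in>V. \<Sum>y\<in>V. \<bar>g x - g y\<bar>) < (\<Sum>x\<in>V. \<Sum>y\<in>V. \<bar>f x - f y\<bar>)"
proof -
  define R where "R = V - {u, v}"
  have V: "V = insert u (insert v R)" using uV vV R_def by auto
  have finR: "finite R" using fin R_def by auto
  have uR: "u \<notin> R" and vR: "v \<notin> R" using R_def by auto
  have ins: "(\<Sum>x\<in>V. \<Sum>y\<in>V. \<bar>h x - h y\<bar>) =
     (\<bar>h u - h v\<bar> + \<bar>h v - h u\<bar>) + 2 * (\<Sum>y\<in>R. \<bar>h u - h y\<bar> + \<bar>h v - h y\<bar>)
     + (\<Sum>x\<in>R. \<Sum>y\<in>R. \<bar>h x - h y\<bar>)" for h :: "'a \<Rightarrow> real"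
  proof -
    have "(\<Sum>x\<in>V. \<Sum>y\<in>V. \<bar>h x - h y\<bar>) =
      (\<bar>h u - h v\<bar> + (\<Sum>y\<in>R. \<bar>h u - h y\<bar>)) + (\<bar>h v - h u\<bar> + (\<Sum>y\<in>R. \<bar>h v - h y\<bar>))
      + (\<Sum>x\<in>R. \<bar>h x - h u\<bar> + \<bar>h x - h v\<bar> + (\<Sum>y\<in>R. \<bar>h x - h y\<bar>))"
      unfolding V using finR uR vR uv by (simp add: add.assoc)
    also have "(\<Sum>x\<in>R. \<bar>h x - h u\<bar> + \<bar>h x - h v\<bar> + (\<Sum>y\<in>R. \<bar>h x - h y\<bar>))
       = (\<Sum>y\<in>R. \<bar>h u - h y\<bar> + \<bar>h v - h y\<bar>) + (\<Sum>x\<in>R. \<Sum>y\<in>R. \<bar>h x - h y\<bar>)"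
      by (simp add: sum.distrib abs_minus_commute)
    finally show ?thesis by (simp add: sum.distrib)
  qed
  have RR: "(\<Sum>x\<in>R. \<Sum>y\<in>R. \<bar>g x - g y\<bar>) = (\<Sum>x\<in>R. \<Sum>y\<in>R. \<bar>f x - f y\<bar>)"
  proof (intro sum.cong refl)
    fix x y assume "x \<in> R" "y \<in> R"
    then have "g x = f x" "g y = f y" using uR vR same by metis+
    then show "\<bar>g x - g y\<bar> = \<bar>f x - f y\<bar>" by simp
  qed
  have Rle: "(\<Sum>y\<in>R. \<bar>g u - g y\<bar> + \<bar>g v - g y\<bar>) \<le> (\<Sum>y\<in>R. \<bar>f u - f y\<bar> + \<bar>f v - f y\<bar>)"
  proof (rule sum_mono)
    fix y assume "y \<in> R"
    then have "y \<noteq> u" "y \<noteq> v" using uR vR by auto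
    then have "g y = f y" using same by blast
    then show "\<bar>g u - g y\<bar> + \<bar>g v - g y\<bar> \<le> \<bar>f u - f y\<bar> + \<bar>f v - f y\<bar>"
      using fu fv gv a3 by (simp add: abs_if)
  qed
  have "\<bar>g u - g v\<bar> + \<bar>g v - g u\<bar> < \<bar>f u - f v\<bar> + \<bar>f v - f u\<bar>"
    using fu fv gv a3 by (simp add: abs_if)
  then show ?thesis unfolding ins[of f] ins[of g] using RR Rle by linarith
qed

theorem lemma2:
  fixes V :: "'a set" and E :: "'a set set" and T :: "'a set" and u v w :: 'a
  assumes "simple_graph V E"
    and "card {x \<in> V. pendent E x} \<ge> 2"
    and "u \<in> V" and "degree E u \<ge> 3"
    and "hanging_tree V E T w u"
    and "v \<in> V" and "pendent E v" and "v \<notin> T"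
  shows "irr_t V E > irr_t V (branch_transform E w u v)"
proof -
  let ?E' = "branch_transform E w u v"
  have finV: "finite V" using assms(1) unfolding simple_graph_def by auto
  have EV: "E \<subseteq> Pow V" using assms(1) unfolding simple_graph_def by auto
  have finE: "finite E" using finite_subset[OF EV] finV by auto
  have ht: "T \<subseteq> V" "u \<notin> T" "w \<in> T"
    and Eeq: "E = induced_edges E T \<union> induced_edges E (V - T) \<union> {{w, u}}"
    using assms(5) unfolding hanging_tree_def by auto
  have wuE: "{w,u} \<in> E" using Eeq by blast
  have dv: "degree E v = 1" using assms(7) unfolding pendent_def .
  have uv: "u \<noteq> v" using dv assms(4) by auto
  have wu: "w \<noteq> u" and wv: "w \<noteq> v" using ht assms(8) by auto
  have wvE: "{w,v} \<notin> E"
  proof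
    assume h: "{w,v} \<in> E"
    have "{w,v} \<notin> induced_edges E T" using assms(8) unfolding induced_edges_def by auto
    moreover have "{w,v} \<notin> induced_edges E (V - T)" using ht unfolding induced_edges_def by auto
    moreover have "{w,v} \<noteq> {w,u}" using uv wv by (auto simp: doubleton_eq_iff)
    ultimately show False using h Eeq by blast
  qed
  have E'def: "?E' = (E - {{w,u}}) \<union> {{w,v}}" unfolding branch_transform_def ..
  have deg_other: "degree ?E' x = degree E x" if "x \<noteq> u" "x \<noteq> v" "x \<noteq> w" for x
  proof -
    have "{e \<in> ?E'. x \<in> e} = {e \<in> E. x \<in> e}" using that unfolding E'def by auto
    then show ?thesis unfolding degree_def by simp
  qed
  have deg_w: "degree ?E' w = degree E w"
  proof -
    let ?A = "{e \<in> E. w \<in> e}"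
    have eq: "{e \<in> ?E'. w \<in> e} = insert {w,v} (?A - {{w,u}})" unfolding E'def by auto
    have n: "{w,v} \<notin> ?A - {{w,u}}" using wvE by auto
    have m: "{w,u} \<in> ?A" using wuE by auto
    have f: "finite ?A" using finE by auto
    have c: "card (?A - {{w,u}}) = card ?A - 1" using m f by (simp add: card_Diff_singleton)
    have p: "card ?A > 0" using m f card_gt_0_iff by blast
    have "card (insert {w,v} (?A - {{w,u}})) = Suc (card (?A - {{w,u}}))"
      using n f by simp
    then show ?thesis unfolding degree_def eq using c p by simp
  qed
  have deg_u: "degree ?E' u = degree E u - 1"
  proof -
    have "{e \<in> ?E'. u \<in> e} = {e \<in> E. u \<in> e} - {{w,u}}" unfolding E'def using uv wu by auto
    moreover have "{w,u} \<in> {e \<in> E. u \<in> e}" using wuE by auto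
    ultimately show ?thesis unfolding degree_def by (simp add: card_Diff_singleton)
  qed
  have deg_v: "degree ?E' v = 2"
  proof -
    have "{e \<in> ?E'. v \<in> e} = insert {w,v} {e \<in> E. v \<in> e}" unfolding E'def using uv wv by auto
    moreover have "{w,v} \<notin> {e \<in> E. v \<in> e}" using wvE by auto
    moreover have "finite {e \<in> E. v \<in> e}" using finE by auto
    ultimately show ?thesis unfolding degree_def using dv[unfolded degree_def] by simp
  qed
  have key: "(\<Sum>x\<in>V. \<Sum>y\<in>V. \<bar>real (degree ?E' x) - real (degree ?E' y)\<bar>)
     < (\<Sum>x\<in>V. \<Sum>y\<in>V. \<bar>real (degree E x) - real (degree E y)\<bar>)"
  proof (rule sum_abs_lemma[OF finV assms(3) assms(6) uv])
    fix x assume "x \<noteq> u" "x \<noteq> v"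
    then show "real (degree ?E' x) = real (degree E x)"
      using deg_other deg_w by (cases "x = w") auto
  next
    show "real (degree ?E' u) = real (degree E u) - 1" using deg_u assms(4) by simp
  qed (use dv deg_v assms(4) in auto)
  then show ?thesis unfolding irr_t_def by simp
qed

end
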